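(* Fix $t>0$. The set $\Delta_{t,\mu}$ is invariant under $\lambda\mapsto1/\bar\lambda$, and $$\Delta_{t,\mu}=\{\lambda\in\mathbb C\setminus\{0\}: T(\lambda)<t\}.$$ Moreover, $T(\lambda)>t$ for every $\lambda\in\mathbb C\setminus(\overline{\Delta_{t,\mu}}\cup\{0\})$; $T(\lambda)\ge t$ for every $\lambda\in\partial\Delta_{t,\mu}\cap\mathbb T$; and $T(\lambda)=t$ for every $\lambda\in\partial\Delta_{t,\mu}\setminus\mathbb T$.
   Context: Let $\mu$ be a Borel probability measure on $\mathbb T$. For $r\in(0,\infty)\setminus\{1\}$ and $\theta\in\mathbb R$ let $f(r,\theta)=\frac12\frac{1-r^2}{-\log r}\int_{-\pi}^{\pi}\frac{d\mu(e^{ix})}{|1-re^{i(\theta-x)}|^2}$, and let $f(1^-,\theta)=\int_{-\pi}^{\pi}\frac{d\mu(e^{ix})}{|1-e^{i(\theta-x)}|^2}\in(0,\infty]$. Define $T:\mathbb C\setminus\{0\}\to[0,\infty)$ by $T(re^{i\theta})=1/f(r,\theta)$ if $r\ne1$ and $T(e^{i\theta})=1/f(1^-,\theta)$ (with $1/\infty=0$). Fix $t>0$; let $r_t(\theta)=\sup\{0<r<1: f(r,\theta)<\frac1t\}\in(0,1]$, $U_t=\{\theta\in(-\pi,\pi]: f(1^-,\theta)>\frac1t\}$, and $\Delta_{t,\mu}=\{re^{i\theta}:\theta\in U_t,\ r_t(\theta)<r<1/r_t(\theta)\}$. *)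

theory Defs
  imports "HOL-Probability.Probability"
begin

text \<open>The measure mu is a Borel probability measure on the complex plane
concentrated on the unit circle; a point w = exp(i x) of the circle. Then
exp(i(theta - x)) = exp(i theta) * cnj w.\<close>

definition circ_meas :: "complex measure \<Rightarrow> bool" where
  "circ_meas \<mu> \<longleftrightarrow> prob_space \<mu> \<and> sets \<mu> = sets borel \<and> emeasure \<mu> (sphere 0 1) = 1"

definition fP :: "complex measure \<Rightarrow> real \<Rightarrow> real \<Rightarrow> real" where
  "fP \<mu> r \<theta> = (1/2) * ((1 - r^2) / (- ln r)) *
      integral\<^sup>L \<mu> (\<lambda>w. 1 / (cmod (1 - complex_of_real r * exp (\<i> * complex_of_real \<theta>) * cnj w))\<^sup>2)"

text \<open>f(1^-,theta), valued in (0,inf]; the integrand is +inf where the denominator vanishes.\<close>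
definition fOne :: "complex measure \<Rightarrow> real \<Rightarrow> ennreal" where
  "fOne \<mu> \<theta> = (\<integral>\<^sup>+ w. inverse (ennreal ((cmod (1 - exp (\<i> * complex_of_real \<theta>) * cnj w))\<^sup>2)) \<partial>\<mu>)"

text \<open>T(r e^{i theta}) with r = |z|, theta = Arg z (f is 2 pi-periodic in theta), 1/inf = 0.\<close>
definition Tfun :: "complex measure \<Rightarrow> complex \<Rightarrow> real" where
  "Tfun \<mu> z = (if cmod z = 1 then (if fOne \<mu> (Arg z) = \<infinity> then 0 else 1 / enn2real (fOne \<mu> (Arg z)))
               else 1 / fP \<mu> (cmod z) (Arg z))"

definition r_t :: "complex measure \<Rightarrow> real \<Rightarrow> real \<Rightarrow> real" where
  "r_t \<mu> t \<theta> = Sup {r. 0 < r \<and> r < 1 \<and> fP \<mu> r \<theta> < 1 / t}"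

definition U_t :: "complex measure \<Rightarrow> real \<Rightarrow> real set" where
  "U_t \<mu> t = {\<theta>. - pi < \<theta> \<and> \<theta> \<le> pi \<and> fOne \<mu> \<theta> > ennreal (1 / t)}"

definition Delta :: "complex measure \<Rightarrow> real \<Rightarrow> complex set" where
  "Delta \<mu> t = {complex_of_real r * exp (\<i> * complex_of_real \<theta>) | r \<theta>.
      \<theta> \<in> U_t \<mu> t \<and> r_t \<mu> t \<theta> < r \<and> r < 1 / r_t \<mu> t \<theta>}"

end

theory Submission imports Defs "HOL-Real_Asymp.Real_Asymp" begin

definition hfac :: "real \<Rightarrow> real" where
  "hfac \<rho> = (if \<rho> = 1 then 1 else (1 - \<rho>^2) / (-2 * ln \<rho>))"

lemma hfac_pos: "\<rho> > 0 \<Longrightarrow> hfac \<rho> > 0"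
proof -
  assume p: "\<rho> > 0"
  show ?thesis
  proof (cases "\<rho> < 1")
    case True
    then have "ln \<rho> < 0" using p by simp
    moreover have "\<rho>^2 < 1" using True p by (simp add: power_less_one_iff abs_less_iff)
    ultimately show ?thesis using True by (auto simp: hfac_def intro!: divide_pos_neg)
  next
    case False
    show ?thesis
    proof (cases "\<rho> = 1")
      case True then show ?thesis by (simp add: hfac_def)
    next
      case F: False
      with False have g: "\<rho> > 1" by simp
      then have "ln \<rho> > 0" by simp
      moreover have "\<rho>^2 > 1" using g by (simp add: one_less_power)
      ultimately show ?thesis using g by (auto simp: hfac_def intro!: divide_neg_pos)
    qed
  qed
qed

lemma hfac_lim1: "((\<lambda>\<rho>. (1 - \<rho>^2) / (-2 * ln \<rho>)) \<longlongrightarrow> 1) (at (1::real))"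
  by real_asymp

lemma hfac_cont: "\<rho> > 0 \<Longrightarrow> isCont hfac \<rho>"
proof -
  assume p: "\<rho> > 0"
  show ?thesis
  proof (cases "\<rho> = 1")
    case True
    have "(hfac \<longlongrightarrow> 1) (at 1)"
      using hfac_lim1 by (rule Lim_transform_eventually) (auto simp: hfac_def eventually_at_filter)
    then show ?thesis using True by (simp add: isCont_def hfac_def)
  next
    case False
    have ev: "\<forall>\<^sub>F x in nhds \<rho>. hfac x = (1 - x^2) / (-2 * ln x)"
    proof -
      have "open ({0<..} - {1::real})" by auto
      moreover have "\<rho> \<in> {0<..} - {1}" using p False by auto
      ultimately have "\<forall>\<^sub>F x in nhds \<rho>. x \<in> {0<..} - {1}" by (rule eventually_nhds_in_open)
      then show ?thesis by eventually_elim (auto simp: hfac_def)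
    qed
    have "isCont (\<lambda>x. (1 - x^2) / (-2 * ln x)) \<rho>"
      using p False by (intro continuous_intros) auto
    then show ?thesis
      using ev by (simp add: isCont_def hfac_def[of \<rho>] False) (rule Lim_transform_eventually, auto simp: eventually_at_filter hfac_def elim: eventually_mono)
  qed
qed



lemma key_ineq: "0 < (\<rho>::real) \<Longrightarrow> \<rho> < 1 \<Longrightarrow> -2 * ln \<rho> < (1 - \<rho>^2) / \<rho>"
proof -
  assume p: "0 < \<rho>" "\<rho> < 1"
  define g where "g x = 1/x - x + 2 * ln x" for x :: real
  have d: "\<And>x::real. \<rho> \<le> x \<Longrightarrow> x \<le> 1 \<Longrightarrow> DERIV g x :> (-1/x^2 - 1 + 2/x)"
  proof -
    fix x :: real assume "\<rho> \<le> x" "x \<le> 1" then have x: "\<rho> \<le> x \<and> x \<le> 1" by simp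
    then have "x > 0" using p by auto
    then show "DERIV g x :> (-1/x^2 - 1 + 2/x)" unfolding g_def
      by (auto intro!: derivative_eq_intros simp: power2_eq_square field_simps)
  qed
  obtain z where z: "z > \<rho>" "z < 1" "g 1 - g \<rho> = (1 - \<rho>) * (-1/z^2 - 1 + 2/z)"
    using MVT2[OF p(2) d] by auto
  have zp: "z > 0" using z p by auto
  have "-1/z^2 - 1 + 2/z = -((1 - z)^2 / z^2)" using zp by (simp add: field_simps power2_eq_square)
  moreover have "(1 - z)^2 / z^2 > 0" using z zp by auto
  ultimately have "g 1 - g \<rho> < 0" using z p by (simp add: mult_pos_neg)
  then have "g \<rho> > 0" by (simp add: g_def)
  then show ?thesis using p by (simp add: g_def field_simps power2_eq_square)
qed

definition qf :: "real \<Rightarrow> real \<Rightarrow> real" where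
  "qf c x = (1 - x^2) / ((-2 * ln x) * (1 - 2*c*x + x^2))"

lemma qf_deriv:
  fixes x c :: real
  assumes x: "0 < x" "x < 1" and c: "c \<le> 1"
  shows "DERIV (qf c) x :> ((-2*x)*((-2*ln x)*(1 - 2*c*x + x^2)) - (1-x^2)*((-2/x)*(1 - 2*c*x + x^2) + (-2*ln x)*(2*x - 2*c))) / ((-2*ln x)*(1 - 2*c*x + x^2))^2"
proof -
  have D: "1 - 2*c*x + x^2 > 0"
  proof -
    have "1 - 2*c*x + x^2 = (1-x)^2 + 2*x*(1-c)" by (simp add: power2_eq_square algebra_simps)
    moreover have "(1-x)^2 > 0" using x by auto
    moreover have "2*x*(1-c) \<ge> 0" using x c by auto
    ultimately show ?thesis by linarith
  qed
  have L: "ln x < 0" using x by simp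
  have nz: "(-2 * ln x) * (1 - 2*c*x + x^2) \<noteq> 0" using D L by auto
  have d1: "DERIV (\<lambda>x. 1 - x^2) x :> -2*x" by (auto intro!: derivative_eq_intros)
  have d2: "DERIV (\<lambda>x. -2 * ln x) x :> -2/x" using x by (auto intro!: derivative_eq_intros simp: field_simps)
  have d3: "DERIV (\<lambda>x. 1 - 2*c*x + x^2) x :> 2*x - 2*c" by (auto intro!: derivative_eq_intros)
  note d4 = DERIV_mult[OF d2 d3]
  note d5 = DERIV_divide[OF d1 d4 nz]
  show ?thesis unfolding qf_def[abs_def]
    using d5 by (simp add: power2_eq_square algebra_simps)
qed

lemma qf_deriv_pos:
  fixes x c :: real
  assumes x: "0 < x" "x < 1" and c: "-1 \<le> c" "c \<le> 1"
  shows "((-2*x)*((-2*ln x)*(1 - 2*c*x + x^2)) - (1-x^2)*((-2/x)*(1 - 2*c*x + x^2) + (-2*ln x)*(2*x - 2*c))) / ((-2*ln x)*(1 - 2*c*x + x^2))^2 > 0"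
proof -
  define l where "l = - ln x"
  have l: "l > 0" using ln_less_zero[OF x] by (simp add: l_def)
  have ki: "2*l < (1-x^2)/x" using key_ineq[OF x] by (simp add: l_def)
  define M1 where "M1 = (1-x)^2 * (2*l + (1-x^2)/x)"
  define M2 where "M2 = (1+x)^2 * ((1-x^2)/x - 2*l)"
  have x2: "x^2 < 1" using mult_strict_mono[of x 1 x 1] x by (simp add: power2_eq_square)
  have "(1-x^2)/x > 0" using x x2 by simp
  then have "M1 > 0" using x l unfolding M1_def by (intro mult_pos_pos) auto
  moreover have "M2 > 0" using ki x unfolding M2_def by (intro mult_pos_pos) auto
  ultimately have pos: "(1+c)/2 * M1 + (1-c)/2 * M2 > 0"
  proof -
    assume a: "M1 > 0" "M2 > 0"
    have "(1+c)/2 * M1 \<ge> 0" "(1-c)/2 * M2 \<ge> 0" using a c by auto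
    moreover have "(1+c)/2 * M1 > 0 \<or> (1-c)/2 * M2 > 0" using a c by (cases "c = 1") auto
    ultimately show ?thesis by linarith
  qed
  have eq: "((-2*x)*((-2*ln x)*(1 - 2*c*x + x^2)) - (1-x^2)*((-2/x)*(1 - 2*c*x + x^2) + (-2*ln x)*(2*x - 2*c)))
     = 2 * ((1+c)/2 * M1 + (1-c)/2 * M2)"
  proof -
    have "x * ((-2*x)*((-2*ln x)*(1 - 2*c*x + x^2)) - (1-x^2)*((-2/x)*(1 - 2*c*x + x^2) + (-2*ln x)*(2*x - 2*c)))
     = x * (2 * ((1+c)/2 * M1 + (1-c)/2 * M2))"
      using x unfolding M1_def M2_def l_def by (simp add: algebra_simps power2_eq_square diff_divide_distrib add_divide_distrib)
    then show ?thesis using x by simp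
  qed
  have "((-2*ln x)*(1 - 2*c*x + x^2))^2 > 0"
  proof -
    have "1 - 2*c*x + x^2 = (1-x)^2 + 2*x*(1-c)" by (simp add: power2_eq_square algebra_simps)
    moreover have "(1-x)^2 > 0" using x by auto
    moreover have "2*x*(1-c) \<ge> 0" using x c by auto
    ultimately have "1 - 2*c*x + x^2 > 0" by linarith
    then show ?thesis using x by simp
  qed
  then show ?thesis unfolding eq using pos by simp
qed

lemma qf_strict_mono:
  fixes a b c :: real
  assumes "0 < a" "a < b" "b < 1" "-1 \<le> c" "c \<le> 1"
  shows "qf c a < qf c b"
proof (rule DERIV_pos_imp_increasing[OF assms(2)])
  fix x assume "a \<le> x" "x \<le> b"
  then have x: "0 < x" "x < 1" using assms by auto
  show "\<exists>y. DERIV (qf c) x :> y \<and> 0 < y"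
    using qf_deriv[OF x assms(5)] qf_deriv_pos[OF x assms(4,5)] by blast
qed

lemma tendsto_inverse_ennreal':
  fixes f :: "'a \<Rightarrow> ennreal"
  shows "(f \<longlongrightarrow> a) F \<Longrightarrow> ((\<lambda>x. inverse (f x)) \<longlongrightarrow> inverse a) F"
  using continuous_on_tendsto_compose[OF continuous_on_inverse_ennreal[OF continuous_on_id[of UNIV]], of f a F]
  by simp

lemma norm_one_minus_sq:
  fixes v :: complex and \<rho> :: real
  assumes "cmod v = 1"
  shows "(cmod (1 - of_real \<rho> * v))^2 = 1 - 2*\<rho>*Re v + \<rho>^2"
proof -
  have "(Re v)^2 + (Im v)^2 = 1" using assms by (metis cmod_power2 power_one)
  have "(cmod (1 - of_real \<rho> * v))^2 = (1 - \<rho> * Re v)^2 + (\<rho> * Im v)^2"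
    by (simp add: cmod_power2)
  also have "\<dots> = 1 - 2*\<rho>*Re v + \<rho>^2 * ((Re v)^2 + (Im v)^2)"
    by (simp add: power2_eq_square algebra_simps)
  finally show ?thesis using \<open>(Re v)^2 + (Im v)^2 = 1\<close> by simp
qed

locale CM =
  fixes \<mu> :: "complex measure"
  assumes cm: "circ_meas \<mu>"
begin

sublocale prob_space \<mu> using cm by (simp add: circ_meas_def)

lemma sets_eq: "sets \<mu> = sets borel" using cm by (simp add: circ_meas_def)

lemma space_eq: "space \<mu> = UNIV" using sets_eq_imp_space_eq[OF sets_eq] by simp

lemma meas_borel: "f \<in> borel_measurable borel \<Longrightarrow> f \<in> borel_measurable \<mu>"
  using measurable_cong_sets[OF sets_eq refl] by auto

lemma AE_sphere: "AE w in \<mu>. cmod w = 1"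
proof -
  have "emeasure \<mu> (sphere 0 1) = 1" using cm by (simp add: circ_meas_def)
  then have "prob (sphere 0 1) = 1" by (simp add: emeasure_eq_measure)
  then have "AE x in \<mu>. x \<in> sphere 0 1" by (rule AE_prob_1)
  then show ?thesis by eventually_elim simp
qed

definition K :: "complex \<Rightarrow> complex \<Rightarrow> ennreal" where
  "K z w = ennreal (hfac (cmod z)) * inverse (ennreal ((cmod (1 - z * cnj w))^2))"

definition Phi :: "complex \<Rightarrow> ennreal" where
  "Phi z = (\<integral>\<^sup>+ w. K z w \<partial>\<mu>)"

lemma K_meas[measurable]: "K z \<in> borel_measurable \<mu>"
proof -
  have c: "(\<lambda>w. (cmod (1 - z * cnj w))^2) \<in> borel_measurable borel"
    by (intro borel_measurable_continuous_onI continuous_intros)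
  show ?thesis unfolding K_def[abs_def] using meas_borel[OF c] by measurable
qed

end

context CM begin

lemma den_ge:
  assumes "cmod w = 1"
  shows "\<bar>cmod z - 1\<bar> \<le> cmod (1 - z * cnj w)"
proof -
  have "\<bar>cmod (1::complex) - cmod (z * cnj w)\<bar> \<le> cmod (1 - z * cnj w)" by (rule norm_triangle_ineq3)
  moreover have "cmod (z * cnj w) = cmod z" using assms by (simp add: norm_mult)
  ultimately show ?thesis by (simp add: abs_minus_commute)
qed

lemma den_pos:
  assumes "cmod w = 1" "cmod z \<noteq> 1"
  shows "cmod (1 - z * cnj w) > 0"
  using den_ge[OF assms(1), of z] assms(2) by linarith

lemma K_real:
  assumes "cmod w = 1" "cmod z \<noteq> 1" "z \<noteq> 0"
  shows "K z w = ennreal (hfac (cmod z) / (cmod (1 - z * cnj w))^2)"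
proof -
  have d: "(cmod (1 - z * cnj w))^2 > 0" using den_pos[OF assms(1,2)] by simp
  have "K z w = ennreal (hfac (cmod z)) * ennreal (inverse ((cmod (1 - z * cnj w))^2))"
    unfolding K_def using d by (simp add: inverse_ennreal)
  also have "\<dots> = ennreal (hfac (cmod z) * inverse ((cmod (1 - z * cnj w))^2))"
    using hfac_pos[of "cmod z"] assms(3) d by (simp add: ennreal_mult[symmetric])
  finally show ?thesis by (simp add: divide_inverse)
qed

lemma K_pos:
  assumes "cmod w = 1" "z \<noteq> 0"
  shows "K z w > 0"
proof -
  have "hfac (cmod z) > 0" using assms by (intro hfac_pos) simp
  then show ?thesis unfolding K_def by (simp add: ennreal_zero_less_mult_iff ennreal_inverse_positive)
qed

lemma Phi_pos:
  assumes "z \<noteq> 0" shows "Phi z > 0"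
proof (rule ccontr)
  assume "\<not> Phi z > 0"
  then have "Phi z = 0" by simp
  then have "AE w in \<mu>. K z w = 0" unfolding Phi_def by (simp add: nn_integral_0_iff_AE)
  moreover have "AE w in \<mu>. K z w > 0" using AE_sphere by eventually_elim (use K_pos assms in auto)
  ultimately have "AE w in \<mu>. False" by eventually_elim auto
  then show False by simp
qed

lemma Phi_bound:
  assumes "z \<noteq> 0" "cmod z \<noteq> 1"
  shows "Phi z \<le> ennreal (hfac (cmod z) / (cmod z - 1)^2)"
proof -
  have "Phi z \<le> (\<integral>\<^sup>+ w. ennreal (hfac (cmod z) / (cmod z - 1)^2) \<partial>\<mu>)"
    unfolding Phi_def
  proof (rule nn_integral_mono_AE)
    show "AE w in \<mu>. K z w \<le> ennreal (hfac (cmod z) / (cmod z - 1)^2)"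
      using AE_sphere
    proof eventually_elim
      case (elim w)
      have h: "hfac (cmod z) > 0" using assms by (intro hfac_pos) simp
      have "(cmod z - 1)^2 \<le> (cmod (1 - z * cnj w))^2"
        using den_ge[OF elim, of z] by (metis abs_ge_zero power2_abs power_mono)
      moreover have "(cmod z - 1)^2 > 0" using assms by simp
      ultimately have "hfac (cmod z) / (cmod (1 - z * cnj w))^2 \<le> hfac (cmod z) / (cmod z - 1)^2"
        using h den_pos[OF elim assms(2)] by (intro divide_left_mono) auto
      then show ?case unfolding K_real[OF elim assms(2) assms(1)] by (intro ennreal_leI)
    qed
  qed
  also have "\<dots> = ennreal (hfac (cmod z) / (cmod z - 1)^2)" by (simp add: emeasure_space_1)
  finally show ?thesis .
qed

lemma Phi_fin:
  assumes "z \<noteq> 0" "cmod z \<noteq> 1" shows "Phi z < \<infinity>"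
proof -
  have "ennreal (hfac (cmod z) / (cmod z - 1)^2) < \<infinity>" by simp
  with Phi_bound[OF assms] show ?thesis by (rule le_less_trans)
qed

lemma Phi_fP:
  assumes r: "r > 0" "r \<noteq> 1"
  shows "Phi (of_real r * exp (\<i> * of_real \<theta>)) = ennreal (fP \<mu> r \<theta>)"
proof -
  define z where "z = of_real r * exp (\<i> * of_real \<theta>)"
  have cz: "cmod z = r" using r by (simp add: z_def norm_mult)
  have z0: "z \<noteq> 0" using cz r by auto
  define g where "g w = 1 / (cmod (1 - z * cnj w))^2" for w
  have gm: "g \<in> borel_measurable \<mu>"
  proof -
    have "g \<in> borel_measurable borel" unfolding g_def[abs_def]
      by measurable (intro borel_measurable_continuous_onI continuous_intros)
    then show ?thesis by (rule meas_borel)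
  qed
  have int: "integrable \<mu> (\<lambda>w. hfac r * g w)"
  proof (rule integrable_const_bound[where B = "hfac r / (r - 1)^2"])
    show "AE w in \<mu>. norm (hfac r * g w) \<le> hfac r / (r - 1)^2"
      using AE_sphere
    proof eventually_elim
      case (elim w)
      have h: "hfac r > 0" using r by (intro hfac_pos)
      have "(r - 1)^2 \<le> (cmod (1 - z * cnj w))^2"
        using den_ge[OF elim, of z] cz by (metis abs_ge_zero power2_abs power_mono)
      moreover have "(r - 1)^2 > 0" using r by simp
      ultimately have "hfac r / (cmod (1 - z * cnj w))^2 \<le> hfac r / (r - 1)^2"
        using h den_pos[OF elim, of z] cz r by (intro divide_left_mono) auto
      then show ?case using h by (simp add: g_def)
    qed
    show "(\<lambda>w. hfac r * g w) \<in> borel_measurable \<mu>" using gm by measurable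
  qed
  have "Phi z = (\<integral>\<^sup>+ w. ennreal (hfac r * g w) \<partial>\<mu>)"
    unfolding Phi_def
    by (rule nn_integral_cong_AE, use AE_sphere in eventually_elim)
       (use r cz z0 in \<open>simp add: K_real[OF _ _ z0] g_def\<close>)
  also have "\<dots> = ennreal (\<integral> w. hfac r * g w \<partial>\<mu>)"
    using int hfac_pos[OF r(1)] by (intro nn_integral_eq_integral) (auto simp: g_def)
  also have "(\<integral> w. hfac r * g w \<partial>\<mu>) = hfac r * (\<integral> w. g w \<partial>\<mu>)" by simp
  also have "\<dots> = fP \<mu> r \<theta>"
    unfolding fP_def hfac_def g_def z_def using r by simp
  finally show ?thesis by (simp add: z_def)
qed

lemma Phi_fOne: "Phi (exp (\<i> * of_real \<theta>)) = fOne \<mu> \<theta>"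
  unfolding Phi_def fOne_def K_def by (simp add: hfac_def)

lemma polar: "z = of_real (cmod z) * exp (\<i> * of_real (Arg z))"
  using rcis_cmod_Arg[of z] by (simp add: rcis_def cis_conv_exp)

lemma Phi_circle: "cmod z = 1 \<Longrightarrow> Phi z = fOne \<mu> (Arg z)"
  using polar[of z] Phi_fOne[of "Arg z"] by simp

lemma Phi_off: "z \<noteq> 0 \<Longrightarrow> cmod z \<noteq> 1 \<Longrightarrow> Phi z = ennreal (fP \<mu> (cmod z) (Arg z))"
  using polar[of z] Phi_fP[of "cmod z" "Arg z"] by simp

lemma Tfun_eq:
  assumes "z \<noteq> 0"
  shows "Tfun \<mu> z = (if Phi z = \<infinity> then 0 else 1 / enn2real (Phi z))"
proof (cases "cmod z = 1")
  case True then show ?thesis by (simp add: Tfun_def Phi_circle)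
next
  case False
  have "ennreal (fP \<mu> (cmod z) (Arg z)) > 0" using Phi_pos[OF assms] Phi_off[OF assms False] by simp
  then have "fP \<mu> (cmod z) (Arg z) > 0" by simp
  then show ?thesis using False Phi_off[OF assms False] by (simp add: Tfun_def)
qed

end

lemma qf_inv:
  fixes c \<rho> :: real assumes "\<rho> > 0"
  shows "qf c (1/\<rho>) = qf c \<rho>"
proof -
  have r2: "\<rho>^2 \<noteq> 0" using assms by simp
  have "qf c (1/\<rho>) = (\<rho>^2 * (1 - (1/\<rho>)^2)) / (\<rho>^2 * ((-2 * ln (1/\<rho>)) * (1 - 2*c*(1/\<rho>) + (1/\<rho>)^2)))"
    unfolding qf_def using r2 by (rule mult_divide_mult_cancel_left[symmetric])
  also have "\<rho>^2 * (1 - (1/\<rho>)^2) = -(1 - \<rho>^2)" using r2 by (simp add: field_simps)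
  also have "\<rho>^2 * ((-2 * ln (1/\<rho>)) * (1 - 2*c*(1/\<rho>) + (1/\<rho>)^2)) = -((-2 * ln \<rho>) * (1 - 2*c*\<rho> + \<rho>^2))"
    using assms by (simp add: ln_div field_simps power2_eq_square)
  finally show ?thesis by (simp only: minus_divide_divide qf_def)
qed

context CM begin

definition ray :: "real \<Rightarrow> real \<Rightarrow> complex" where
  "ray \<theta> \<rho> = of_real \<rho> * exp (\<i> * of_real \<theta>)"

lemma cmod_ray: "\<rho> \<ge> 0 \<Longrightarrow> cmod (ray \<theta> \<rho>) = \<rho>"
  by (simp add: ray_def norm_mult)

lemma Re_bounds: "cmod v = 1 \<Longrightarrow> -1 \<le> Re v \<and> Re v \<le> 1"
  using abs_Re_le_cmod[of v] by auto

lemma K_ray: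
  assumes w: "cmod w = 1" and r: "\<rho> > 0" "\<rho> \<noteq> 1"
  shows "K (ray \<theta> \<rho>) w = ennreal (qf (Re (exp (\<i> * of_real \<theta>) * cnj w)) \<rho>)"
proof -
  define v where "v = exp (\<i> * of_real \<theta>) * cnj w"
  have v: "cmod v = 1" using w by (simp add: v_def norm_mult)
  have e: "ray \<theta> \<rho> * cnj w = of_real \<rho> * v" by (simp add: ray_def v_def mult.assoc)
  have "K (ray \<theta> \<rho>) w = ennreal (hfac \<rho> / (1 - 2*\<rho>*Re v + \<rho>^2))"
  proof -
    have "ray \<theta> \<rho> \<noteq> 0" using cmod_ray[of \<rho> \<theta>] r by auto
    then show ?thesis using K_real[OF w, of "ray \<theta> \<rho>"] cmod_ray[of \<rho> \<theta>] r
      by (simp add: e norm_one_minus_sq[OF v])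
  qed
  also have "hfac \<rho> / (1 - 2*\<rho>*Re v + \<rho>^2) = qf (Re v) \<rho>"
    using r by (simp add: hfac_def qf_def mult.commute mult.left_commute)
  finally show ?thesis by (simp add: v_def)
qed

lemma Phi_ray_inv:
  assumes r: "\<rho> > 0"
  shows "Phi (ray \<theta> (1/\<rho>)) = Phi (ray \<theta> \<rho>)"
proof (cases "\<rho> = 1")
  case True then show ?thesis by simp
next
  case False
  have r2: "1/\<rho> > 0" "1/\<rho> \<noteq> 1" using r False by auto
  show ?thesis unfolding Phi_def
    by (rule nn_integral_cong_AE, use AE_sphere in eventually_elim)
       (simp add: K_ray[OF _ r2] K_ray[OF _ r False] qf_inv[OF r])
qed

lemma inv_cnj_ray: "\<rho> > 0 \<Longrightarrow> 1 / cnj (ray \<theta> \<rho>) = ray \<theta> (1/\<rho>)"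
  by (simp add: ray_def exp_cnj exp_minus field_simps)

lemma Phi_sym:
  assumes "z \<noteq> 0" shows "Phi (1 / cnj z) = Phi z"
proof -
  have z: "z = ray (Arg z) (cmod z)" using polar[of z] by (simp add: ray_def)
  have r: "cmod z > 0" using assms by simp
  have "Phi (1 / cnj z) = Phi (ray (Arg z) (1 / cmod z))"
    by (subst z) (simp add: inv_cnj_ray[OF r])
  also have "\<dots> = Phi z" using Phi_ray_inv[OF r, of "Arg z"] z by simp
  finally show ?thesis .
qed

lemma Phi_ray_mono:
  assumes ab: "0 < a" "a < b" "b < 1"
  shows "Phi (ray \<theta> a) < Phi (ray \<theta> b)"
  unfolding Phi_def
proof (rule nn_integral_less)
  have a0: "ray \<theta> a \<noteq> 0" "cmod (ray \<theta> a) \<noteq> 1" using ab cmod_ray[of a \<theta>] by auto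
  show "(\<integral>\<^sup>+ w. K (ray \<theta> a) w \<partial>\<mu>) \<noteq> \<infinity>" using Phi_fin[OF a0] by (simp add: Phi_def)
  have lt: "AE w in \<mu>. K (ray \<theta> a) w < K (ray \<theta> b) w"
    using AE_sphere
  proof eventually_elim
    case (elim w)
    define c where "c = Re (exp (\<i> * of_real \<theta>) * cnj w)"
    have c: "-1 \<le> c" "c \<le> 1" using Re_bounds[of "exp (\<i> * of_real \<theta>) * cnj w"] elim
      by (auto simp: c_def norm_mult)
    have "qf c a < qf c b" by (rule qf_strict_mono[OF ab c])
    moreover have ka: "K (ray \<theta> a) w = ennreal (qf c a)" unfolding c_def by (rule K_ray[OF elim]) (use ab in auto)
    moreover have kb: "K (ray \<theta> b) w = ennreal (qf c b)" unfolding c_def by (rule K_ray[OF elim]) (use ab in auto)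
    moreover have "K (ray \<theta> b) w > 0" using K_pos[OF elim, of "ray \<theta> b"] ab by (simp add: ray_def)
    ultimately show ?case by (simp add: ennreal_lessI)
  qed
  then show "AE w in \<mu>. K (ray \<theta> a) w \<le> K (ray \<theta> b) w" by eventually_elim simp
  show "\<not> (AE w in \<mu>. K (ray \<theta> b) w \<le> K (ray \<theta> a) w)"
  proof
    assume "AE w in \<mu>. K (ray \<theta> b) w \<le> K (ray \<theta> a) w"
    with lt have "AE w in \<mu>. False" by eventually_elim simp
    then show False by simp
  qed
qed auto

lemma Phi_ray_mono':
  assumes "0 < a" "a \<le> b" "b < 1"
  shows "Phi (ray \<theta> a) \<le> Phi (ray \<theta> b)"
  using Phi_ray_mono[of a b \<theta>] assms by (cases "a = b") auto

end

context CM begin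

lemma abs_aux: "\<bar>(x::real) - y\<bar> < \<bar>y - 1\<bar> / 2 \<Longrightarrow> \<bar>y - 1\<bar> / 2 \<le> \<bar>x - 1\<bar>"
  by (auto simp: abs_if split: if_split_asm)

lemma K_tendsto:
  assumes z: "z \<longlonglongrightarrow> z0" and z0: "z0 \<noteq> 0" and w: "cmod w = 1"
  shows "(\<lambda>n. K (z n) w) \<longlonglongrightarrow> K z0 w"
  unfolding K_def
proof (rule tendsto_mult_ennreal)
  have "(\<lambda>n. hfac (cmod (z n))) \<longlonglongrightarrow> hfac (cmod z0)"
    by (rule isCont_tendsto_compose[OF hfac_cont]) (use z0 z in \<open>auto intro: tendsto_intros\<close>)
  then show "(\<lambda>n. ennreal (hfac (cmod (z n)))) \<longlonglongrightarrow> ennreal (hfac (cmod z0))" by (rule tendsto_ennrealI)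
  have "(\<lambda>n. (cmod (1 - z n * cnj w))^2) \<longlonglongrightarrow> (cmod (1 - z0 * cnj w))^2"
    using z by (intro tendsto_intros)
  then show "(\<lambda>n. inverse (ennreal ((cmod (1 - z n * cnj w))^2))) \<longlonglongrightarrow> inverse (ennreal ((cmod (1 - z0 * cnj w))^2))"
    by (intro tendsto_inverse_ennreal' tendsto_ennrealI)
  show "\<not> (ennreal (hfac (cmod z0)) = 0 \<and> inverse (ennreal ((cmod (1 - z0 * cnj w))\<^sup>2)) = \<infinity> \<or>
        ennreal (hfac (cmod z0)) = \<infinity> \<and> inverse (ennreal ((cmod (1 - z0 * cnj w))\<^sup>2)) = 0)"
    using hfac_pos[of "cmod z0"] z0 by auto
qed

lemma Phi_fatou:
  assumes z: "z \<longlonglongrightarrow> z0" and z0: "z0 \<noteq> 0"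
  shows "Phi z0 \<le> liminf (\<lambda>n. Phi (z n))"
proof -
  have "Phi z0 = (\<integral>\<^sup>+ w. liminf (\<lambda>n. K (z n) w) \<partial>\<mu>)"
    unfolding Phi_def
    by (rule nn_integral_cong_AE, use AE_sphere in eventually_elim)
       (simp add: lim_imp_Liminf[OF sequentially_bot K_tendsto[OF z z0]])
  also have "\<dots> \<le> liminf (\<lambda>n. Phi (z n))"
    unfolding Phi_def by (rule nn_integral_liminf) simp
  finally show ?thesis .
qed

lemma Phi_cont:
  assumes z: "z \<longlonglongrightarrow> z0" and z0: "z0 \<noteq> 0" and c0: "cmod z0 \<noteq> 1"
  shows "(\<lambda>n. Phi (z n)) \<longlonglongrightarrow> Phi z0"
proof -
  define d where "d = min (cmod z0 / 2) (\<bar>cmod z0 - 1\<bar> / 2)"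
  have d: "d > 0" using z0 c0 by (simp add: d_def)
  obtain N where N: "\<And>n. n \<ge> N \<Longrightarrow> dist (z n) z0 < d"
    using z d unfolding LIMSEQ_def by blast
  have hb: "(\<lambda>n. hfac (cmod (z n))) \<longlonglongrightarrow> hfac (cmod z0)"
    by (rule isCont_tendsto_compose[OF hfac_cont]) (use z0 z in \<open>auto intro: tendsto_intros\<close>)
  then obtain H where H: "\<And>n. norm (hfac (cmod (z n))) \<le> H"
    using convergent_imp_Bseq[OF convergentI[OF hb]] unfolding Bseq_def by auto
  define e where "e = \<bar>cmod z0 - 1\<bar> / 2"
  have e: "e > 0" using c0 by (simp add: e_def)
  have zn: "z n \<noteq> 0 \<and> cmod (z n) \<noteq> 1 \<and> e \<le> \<bar>cmod (z n) - 1\<bar>" if "n \<ge> N" for n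
  proof -
    have dd: "cmod (z n - z0) < d" using N[OF that] by (simp add: dist_norm)
    have "\<bar>cmod (z n) - cmod z0\<bar> \<le> cmod (z n - z0)" by (rule norm_triangle_ineq3)
    then have a: "\<bar>cmod (z n) - cmod z0\<bar> < d" using dd by linarith
    then have "cmod (z n) > 0" unfolding d_def by arith
    moreover have "e \<le> \<bar>cmod (z n) - 1\<bar>"
    proof -
      have "\<bar>cmod (z n) - cmod z0\<bar> < \<bar>cmod z0 - 1\<bar> / 2" using a by (simp add: d_def)
      then show ?thesis unfolding e_def by (rule abs_aux)
    qed
    ultimately show ?thesis using e by auto
  qed
  have bound: "AE w in \<mu>. K (z (i + N)) w \<le> ennreal (H / e^2)" for i
    using AE_sphere
  proof eventually_elim
    case (elim w)
    have zi: "z (i+N) \<noteq> 0" "cmod (z (i+N)) \<noteq> 1" "e \<le> \<bar>cmod (z (i+N)) - 1\<bar>" using zn[of "i+N"] by auto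
    have hp: "hfac (cmod (z (i+N))) > 0" using zi by (intro hfac_pos) simp
    have hH: "hfac (cmod (z (i+N))) \<le> H" using H[of "i+N"] hp by simp
    have "e \<le> cmod (1 - z (i+N) * cnj w)" using den_ge[OF elim, of "z (i+N)"] zi by linarith
    then have "e^2 \<le> (cmod (1 - z (i+N) * cnj w))^2" using e by (intro power_mono) auto
    then have "hfac (cmod (z (i+N))) / (cmod (1 - z (i+N) * cnj w))^2 \<le> H / e^2"
      using hH hp e by (intro frac_le) auto
    then show ?case unfolding K_real[OF elim zi(2) zi(1)] by (intro ennreal_leI)
  qed
  have "(\<lambda>i. Phi (z (i + N))) \<longlonglongrightarrow> Phi z0"
    unfolding Phi_def
  proof (rule nn_integral_dominated_convergence[where w = "\<lambda>_. ennreal (H / e^2)"])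
    show "AE w in \<mu>. (\<lambda>i. K (z (i + N)) w) \<longlonglongrightarrow> K z0 w"
      using AE_sphere by eventually_elim (rule K_tendsto[OF LIMSEQ_ignore_initial_segment[OF z] z0])
    show "(\<integral>\<^sup>+ w. ennreal (H / e^2) \<partial>\<mu>) < \<infinity>" by (simp add: emeasure_space_1)
  qed (use bound in auto)
  then show ?thesis by (rule LIMSEQ_offset)
qed

lemma cancel_aux: "(u::real) \<noteq> 0 \<Longrightarrow> L \<noteq> 0 \<Longrightarrow> (a*u)/L/(u*u) = a/(L*u)"
  by (simp add: field_simps)

lemma Phi_small:
  assumes "z \<noteq> 0" "cmod z \<le> 1/2" "ln (cmod z) \<le> - 2 * t" "t > 0"
  shows "Phi z \<le> ennreal (3 / (4 * t))"
proof -
  define \<rho> where "\<rho> = cmod z"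
  have r: "0 < \<rho>" "\<rho> \<le> 1/2" "ln \<rho> \<le> -2*t" using assms by (auto simp: \<rho>_def)
  have "hfac \<rho> / (\<rho> - 1)^2 = (1 + \<rho>) / ((-2 * ln \<rho>) * (1 - \<rho>))"
  proof -
    have n1: "1 - \<rho> \<noteq> 0" "\<rho> - 1 \<noteq> 0" "ln \<rho> \<noteq> 0" "\<rho> \<noteq> 1" using r by auto
    have h1: "hfac \<rho> = ((1 + \<rho>) * (1 - \<rho>)) / (-2 * ln \<rho>)"
      using n1 by (simp add: hfac_def power2_eq_square algebra_simps)
    have h2: "(\<rho> - 1)^2 = (1 - \<rho>) * (1 - \<rho>)" by (simp add: power2_eq_square algebra_simps)
    have "hfac \<rho> / (\<rho> - 1)^2 = ((1 + \<rho>) * (1 - \<rho>)) / (-2 * ln \<rho>) / ((1 - \<rho>) * (1 - \<rho>))"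
      by (simp only: h1 h2)
    also have "\<dots> = (1 + \<rho>) / ((-2 * ln \<rho>) * (1 - \<rho>))"
      using cancel_aux[of "1 - \<rho>" "-2 * ln \<rho>" "1 + \<rho>"] n1 by simp
    finally show ?thesis .
  qed
  also have "\<dots> \<le> (3/2) / ((4 * t) * (1/2))"
  proof (rule frac_le)
    have "(4 * t) * (1/2) \<le> (-2 * ln \<rho>) * (1 - \<rho>)"
      by (rule mult_mono) (use r assms(4) in auto)
    then show "(4 * t) * (1/2) \<le> (-2 * ln \<rho>) * (1 - \<rho>)" .
  qed (use r assms(4) in auto)
  also have "\<dots> = 3 / (4 * t)" by simp
  finally have "hfac \<rho> / (\<rho> - 1)^2 \<le> 3 / (4 * t)" .
  moreover have "cmod z \<noteq> 1" using assms by auto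
  ultimately show ?thesis using Phi_bound[OF assms(1)] \<rho>_def
    by (meson ennreal_leI order_trans)
qed

end

context CM begin

lemma K_ray_le1:
  assumes w: "cmod w = 1" and r: "0 < \<rho>" "\<rho> < 1"
  shows "K (ray \<theta> \<rho>) w \<le> K (ray \<theta> 1) w"
proof -
  define s where "s n = 1 - (1 - \<rho>) / (real n + 2)" for n
  have s: "\<rho> < s n" "s n < 1" for n
  proof -
    have "(1 - \<rho>) / (real n + 2) < 1 - \<rho>" using r by (simp add: divide_less_eq)
    moreover have "(1 - \<rho>) / (real n + 2) > 0" using r by simp
    ultimately show "\<rho> < s n" "s n < 1" by (auto simp: s_def)
  qed
  have "(\<lambda>n. (1 - \<rho>) / (real n + 2)) \<longlonglongrightarrow> 0" by real_asymp
  then have "s \<longlonglongrightarrow> 1 - 0" unfolding s_def[abs_def] by (intro tendsto_intros)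
  then have "(\<lambda>n. complex_of_real (s n)) \<longlonglongrightarrow> complex_of_real 1" by (intro tendsto_of_real) simp
  then have "(\<lambda>n. complex_of_real (s n) * exp (\<i> * of_real \<theta>)) \<longlonglongrightarrow> complex_of_real 1 * exp (\<i> * of_real \<theta>)"
    by (rule tendsto_mult_right)
  then have "(\<lambda>n. ray \<theta> (s n)) \<longlonglongrightarrow> ray \<theta> 1" unfolding ray_def by simp
  then have lim: "(\<lambda>n. K (ray \<theta> (s n)) w) \<longlonglongrightarrow> K (ray \<theta> 1) w"
    by (rule K_tendsto) (use w in \<open>auto simp: ray_def\<close>)
  define c where "c = Re (exp (\<i> * of_real \<theta>) * cnj w)"
  have c: "-1 \<le> c" "c \<le> 1" using Re_bounds[of "exp (\<i> * of_real \<theta>) * cnj w"] w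
    by (auto simp: c_def norm_mult)
  have "K (ray \<theta> \<rho>) w \<le> K (ray \<theta> (s n)) w" for n
  proof -
    have "qf c \<rho> < qf c (s n)" using qf_strict_mono[OF r(1) s(1) s(2) c] .
    moreover have "K (ray \<theta> \<rho>) w = ennreal (qf c \<rho>)" unfolding c_def by (rule K_ray[OF w]) (use r in auto)
    moreover have "K (ray \<theta> (s n)) w = ennreal (qf c (s n))" unfolding c_def
      by (rule K_ray[OF w]) (use r s[of n] in auto)
    ultimately show ?thesis by (simp add: ennreal_leI)
  qed
  then show ?thesis using lim by (intro LIMSEQ_le_const) auto
qed

lemma Phi_ray_le1:
  assumes r: "0 < \<rho>" "\<rho> < 1"
  shows "Phi (ray \<theta> \<rho>) \<le> fOne \<mu> \<theta>"
proof -
  have "Phi (ray \<theta> \<rho>) \<le> Phi (ray \<theta> 1)"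
    unfolding Phi_def by (rule nn_integral_mono_AE, use AE_sphere in eventually_elim) (rule K_ray_le1[OF _ r])
  then show ?thesis by (simp add: ray_def Phi_fOne)
qed

lemma ray_polar: "z = ray (Arg z) (cmod z)"
  using polar[of z] by (simp add: ray_def)

lemma Arg_ray: "r > 0 \<Longrightarrow> -pi < \<theta> \<Longrightarrow> \<theta> \<le> pi \<Longrightarrow> Arg (ray \<theta> r) = \<theta>"
  unfolding ray_def by (rule Arg_unique) auto

lemma dist_ray: "dist (ray \<theta> a) (ray \<theta> b) = \<bar>a - b\<bar>"
proof -
  have "ray \<theta> a - ray \<theta> b = of_real (a - b) * exp (\<i> * of_real \<theta>)" by (simp add: ray_def algebra_simps)
  then show ?thesis by (simp add: dist_norm norm_mult flip: of_real_diff)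
qed

end

locale CMt = CM +
  fixes t :: real
  assumes tpos: "t > 0"
begin

definition D :: "complex set" where
  "D = {z. z \<noteq> 0 \<and> ennreal (1/t) < Phi z}"

lemma open_D: "open D"
proof -
  have "closed (- D)"
    unfolding closed_sequential_limits
  proof (intro allI impI)
    fix x l assume a: "(\<forall>n. x n \<in> - D) \<and> x \<longlonglongrightarrow> l"
    show "l \<in> - D"
    proof (cases "l = 0")
      case True then show ?thesis by (simp add: D_def)
    next
      case False
      have ev: "eventually (\<lambda>n. x n \<noteq> 0) sequentially"
        using a False by (intro tendsto_imp_eventually_ne) auto
      have "eventually (\<lambda>n. Phi (x n) \<le> ennreal (1/t)) sequentially"
        using ev by eventually_elim (use a in \<open>auto simp: D_def\<close>)
      then have "limsup (\<lambda>n. Phi (x n)) \<le> ennreal (1/t)" by (rule Limsup_bounded)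
      moreover have "liminf (\<lambda>n. Phi (x n)) \<le> limsup (\<lambda>n. Phi (x n))" by (rule Liminf_le_Limsup) simp
      moreover have "Phi l \<le> liminf (\<lambda>n. Phi (x n))" using a False by (intro Phi_fatou) auto
      ultimately have "Phi l \<le> ennreal (1/t)" by order
      then show ?thesis by (auto simp: D_def)
    qed
  qed
  then show ?thesis by (simp add: closed_def)
qed

definition \<rho>0 :: real where "\<rho>0 = min (1/2) (exp (-2*t))"

lemma \<rho>0: "0 < \<rho>0" "\<rho>0 \<le> 1/2" "ln \<rho>0 \<le> -2*t"
proof -
  show p: "0 < \<rho>0" by (simp add: \<rho>0_def)
  show "\<rho>0 \<le> 1/2" by (simp add: \<rho>0_def)
  have "\<rho>0 \<le> exp (-2*t)" by (simp add: \<rho>0_def)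
  then have "ln \<rho>0 \<le> ln (exp (-2*t))" using p by (subst ln_le_cancel_iff) auto
  then show "ln \<rho>0 \<le> -2*t" by simp
qed

lemma Phi_lt_small:
  assumes "z \<noteq> 0" "cmod z \<le> \<rho>0"
  shows "Phi z < ennreal (1/t)"
proof -
  have "ln (cmod z) \<le> ln \<rho>0" using assms \<rho>0 by (subst ln_le_cancel_iff) auto
  then have l: "ln (cmod z) \<le> -2*t" using \<rho>0(3) by linarith
  have "cmod z \<le> 1/2" using assms \<rho>0 by linarith
  then have "Phi z \<le> ennreal (3 / (4 * t))" using Phi_small[OF assms(1) _ l tpos] by simp
  also have "\<dots> < ennreal (1/t)" using tpos by (subst ennreal_less_iff) (auto simp: field_simps)
  finally show ?thesis .
qed

lemma not_D_small: "cmod z \<le> \<rho>0 \<Longrightarrow> z \<notin> D"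
  using Phi_lt_small[of z] by (auto simp: D_def)

lemma zero_not_closure: "0 \<notin> closure D"
proof
  assume "0 \<in> closure D"
  then obtain y where "y \<in> D" "dist y 0 < \<rho>0" using \<rho>0(1) unfolding closure_approachable by blast
  then show False using not_D_small[of y] by simp
qed

lemma D_sym: "z \<in> D \<Longrightarrow> 1 / cnj z \<in> D"
  by (auto simp: D_def Phi_sym)

definition S :: "real \<Rightarrow> real set" where
  "S \<theta> = {r. 0 < r \<and> r < 1 \<and> fP \<mu> r \<theta> < 1 / t}"

lemma S_iff:
  assumes "0 < r" "r < 1"
  shows "r \<in> S \<theta> \<longleftrightarrow> Phi (ray \<theta> r) < ennreal (1/t)"
proof -
  have e: "Phi (ray \<theta> r) = ennreal (fP \<mu> r \<theta>)" unfolding ray_def using assms by (intro Phi_fP) auto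
  have "ray \<theta> r \<noteq> 0" using assms by (simp add: ray_def)
  then have "ennreal (fP \<mu> r \<theta>) > 0" using Phi_pos[of "ray \<theta> r"] e by simp
  then have "fP \<mu> r \<theta> \<ge> 0" by simp
  then show ?thesis using assms tpos by (simp add: S_def e ennreal_less_iff)
qed

lemma S_ne: "\<rho>0 / 2 \<in> S \<theta>"
proof -
  have r: "0 < \<rho>0 / 2" "\<rho>0 / 2 < 1" using \<rho>0 by auto
  have "ray \<theta> (\<rho>0 / 2) \<noteq> 0" "cmod (ray \<theta> (\<rho>0 / 2)) \<le> \<rho>0" using r \<rho>0 cmod_ray[of "\<rho>0/2" \<theta>] by (auto simp: ray_def)
  then show ?thesis using S_iff[OF r] Phi_lt_small by blast
qed

lemma S_bdd: "bdd_above (S \<theta>)"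
  by (rule bdd_aboveI[of _ 1]) (auto simp: S_def)

lemma rt_eq: "r_t \<mu> t \<theta> = Sup (S \<theta>)"
  by (simp add: r_t_def S_def)

lemma rt_pos: "r_t \<mu> t \<theta> > 0"
proof -
  have "\<rho>0 / 2 \<le> Sup (S \<theta>)" using S_ne S_bdd by (rule cSup_upper)
  then show ?thesis using \<rho>0 rt_eq by simp
qed

lemma char1:
  assumes z: "z \<noteq> 0" "cmod z \<le> 1" "ennreal (1/t) < Phi z"
  shows "Arg z \<in> U_t \<mu> t \<and> r_t \<mu> t (Arg z) < cmod z"
proof -
  define \<theta> where "\<theta> = Arg z"
  define \<rho> where "\<rho> = cmod z"
  have zr: "z = ray \<theta> \<rho>" using ray_polar[of z] by (simp add: \<theta>_def \<rho>_def)
  have rp: "\<rho> > 0" "\<rho> \<le> 1" using z by (auto simp: \<rho>_def)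
  have "fOne \<mu> \<theta> > ennreal (1/t)"
  proof (cases "\<rho> = 1")
    case True
    then have "Phi z = fOne \<mu> \<theta>" using Phi_circle[of z] by (simp add: \<rho>_def \<theta>_def)
    then show ?thesis using z by simp
  next
    case False
    then have "Phi z \<le> fOne \<mu> \<theta>" using zr Phi_ray_le1[of \<rho> \<theta>] rp by simp
    then show ?thesis using z by order
  qed
  then have U: "\<theta> \<in> U_t \<mu> t" unfolding U_t_def \<theta>_def using mpi_less_Arg Arg_le_pi by auto
  have "z \<in> D" using z by (simp add: D_def)
  then obtain \<epsilon> where \<epsilon>: "\<epsilon> > 0" "ball z \<epsilon> \<subseteq> D" using open_D by (auto simp: open_contains_ball)
  have le: "r \<le> \<rho> - \<epsilon>" if r: "r \<in> S \<theta>" for r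
  proof (rule ccontr)
    assume nle: "\<not> r \<le> \<rho> - \<epsilon>"
    have r01: "0 < r" "r < 1" using r by (auto simp: S_def)
    have lt: "Phi (ray \<theta> r) < ennreal (1/t)" using S_iff[OF r01] r by simp
    show False
    proof (cases "r < \<rho>")
      case True
      then have "dist (ray \<theta> r) z < \<epsilon>" using nle zr dist_ray[of \<theta> r \<rho>] by simp
      then have "ray \<theta> r \<in> D" using \<epsilon> by (auto simp: dist_commute)
      then show False using lt unfolding D_def by (auto dest: order.asym)
    next
      case False
      then have "\<rho> < 1" using r01 rp by simp
      then have "Phi z \<le> Phi (ray \<theta> r)" using zr False rp r01 by (simp add: Phi_ray_mono')
      then show False using lt z by order
    qed
  qed
  have "Sup (S \<theta>) \<le> \<rho> - \<epsilon>" using S_ne le by (intro cSup_least) auto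
  then have "r_t \<mu> t \<theta> < \<rho>" using rt_eq \<epsilon> by simp
  then show ?thesis using U by (simp add: \<theta>_def \<rho>_def)
qed

lemma char2:
  assumes U: "\<theta> \<in> U_t \<mu> t" and r: "r_t \<mu> t \<theta> < r" "r < 1 / r_t \<mu> t \<theta>"
  shows "ray \<theta> r \<in> D"
proof -
  have rt: "r_t \<mu> t \<theta> > 0" by (rule rt_pos)
  have rp: "r > 0" using r rt by simp
  have f: "fOne \<mu> \<theta> > ennreal (1/t)" using U by (simp add: U_t_def)
  have lt1: "ennreal (1/t) < Phi (ray \<theta> r)" if r1: "r < 1" "r_t \<mu> t \<theta> < r" for r
  proof (rule ccontr)
    assume "\<not> ennreal (1/t) < Phi (ray \<theta> r)"
    then have le: "Phi (ray \<theta> r) \<le> ennreal (1/t)" by simp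
    have rp: "r > 0" using r1 rt by simp
    have "r \<le> Sup (S \<theta>)"
    proof (rule dense_le_bounded[OF rp])
      fix r' assume r': "0 < r'" "r' < r"
      have "Phi (ray \<theta> r') < Phi (ray \<theta> r)" using r' r1 by (intro Phi_ray_mono) auto
      then have "r' \<in> S \<theta>" using S_iff[of r' \<theta>] r' r1 le by simp
      then show "r' \<le> Sup (S \<theta>)" using S_bdd by (rule cSup_upper)
    qed
    then show False using r1 rt_eq by simp
  qed
  have "ennreal (1/t) < Phi (ray \<theta> r)"
  proof (cases r "1::real" rule: linorder_cases)
    case less then show ?thesis using lt1 r by simp
  next
    case equal then show ?thesis using f by (simp add: ray_def Phi_fOne)
  next
    case greater
    have "r_t \<mu> t \<theta> < 1 / r" using r rt rp by (simp add: field_simps)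
    moreover have "1 / r < 1" using greater by simp
    ultimately have "ennreal (1/t) < Phi (ray \<theta> (1/r))" using lt1 by simp
    then show ?thesis using Phi_ray_inv[of "1/r" \<theta>] rp by simp
  qed
  moreover have "ray \<theta> r \<noteq> 0" using rp by (simp add: ray_def)
  ultimately show ?thesis by (simp add: D_def)
qed

lemma Delta_eq: "Delta \<mu> t = D"
proof
  show "Delta \<mu> t \<subseteq> D"
  proof
    fix z assume "z \<in> Delta \<mu> t"
    then obtain r \<theta> where z: "z = ray \<theta> r" "\<theta> \<in> U_t \<mu> t" "r_t \<mu> t \<theta> < r" "r < 1 / r_t \<mu> t \<theta>"
      unfolding Delta_def ray_def by blast
    then show "z \<in> D" using char2 by simp
  qed
next
  show "D \<subseteq> Delta \<mu> t"
  proof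
    fix z assume zD: "z \<in> D"
    then have z: "z \<noteq> 0" "ennreal (1/t) < Phi z" by (auto simp: D_def)
    have mem: "z \<in> Delta \<mu> t" if "Arg z \<in> U_t \<mu> t" "r_t \<mu> t (Arg z) < cmod z" "cmod z < 1 / r_t \<mu> t (Arg z)"
      unfolding Delta_def using that polar[of z] by blast
    show "z \<in> Delta \<mu> t"
    proof (cases "cmod z \<le> 1")
      case True
      from char1[OF z(1) True z(2)] have c: "Arg z \<in> U_t \<mu> t" "r_t \<mu> t (Arg z) < cmod z" by auto
      have rt: "r_t \<mu> t (Arg z) > 0" by (rule rt_pos)
      have "r_t \<mu> t (Arg z) < 1" using c True by simp
      then have "1 < 1 / r_t \<mu> t (Arg z)" using rt by (simp add: field_simps)
      then show ?thesis using mem c True by simp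
    next
      case False
      define z' where "z' = 1 / cnj z"
      have r: "cmod z > 0" using z by simp
      have z'r: "z' = ray (Arg z) (1 / cmod z)" unfolding z'_def
        by (subst (1) ray_polar[of z]) (simp add: inv_cnj_ray[OF r])
      have az: "Arg z' = Arg z" unfolding z'r using r mpi_less_Arg Arg_le_pi by (intro Arg_ray) auto
      have cz: "cmod z' = 1 / cmod z" unfolding z'r using r by (simp add: cmod_ray)
      have z'0: "z' \<noteq> 0" using r cz by auto
      have "Phi z' = Phi z" unfolding z'_def by (rule Phi_sym[OF z(1)])
      then have p': "ennreal (1/t) < Phi z'" using z(2) by simp
      have c'1: "cmod z' \<le> 1" using cz False by (simp add: divide_le_eq_1)
      have c: "Arg z \<in> U_t \<mu> t" "r_t \<mu> t (Arg z) < 1 / cmod z"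
        using char1[OF z'0 c'1 p'] cz az by auto
      have rt: "r_t \<mu> t (Arg z) > 0" by (rule rt_pos)
      have "cmod z < 1 / r_t \<mu> t (Arg z)" using c(2) rt r by (simp add: field_simps)
      moreover have "r_t \<mu> t (Arg z) < cmod z" using c(2) False r by (smt (verit) divide_less_eq_1_pos)
      ultimately show ?thesis using mem c by simp
    qed
  qed
qed

end

context CMt begin

lemma Phi_cases:
  assumes "z \<noteq> 0"
  obtains "Phi z = \<infinity>" | r where "Phi z = ennreal r" "r > 0"
proof -
  have p: "Phi z > 0" using Phi_pos[OF assms] .
  show ?thesis
  proof (cases "Phi z" rule: ennreal_cases)
    case (real r)
    then show ?thesis using p that(2)[of r] by simp
  next
    case top then show ?thesis using that(1) by simp
  qed
qed

lemma Tfun_lt_iff: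
  assumes "z \<noteq> 0"
  shows "Tfun \<mu> z < t \<longleftrightarrow> ennreal (1/t) < Phi z"
proof (cases rule: Phi_cases[OF assms])
  case 1 then show ?thesis using tpos by (simp add: Tfun_eq[OF assms])
next
  case (2 r)
  then have T: "Tfun \<mu> z = 1 / r" by (simp add: Tfun_eq[OF assms])
  have a: "1/r < t \<longleftrightarrow> 1 < t*r" using 2 by (simp add: divide_less_eq)
  have b: "1/t < r \<longleftrightarrow> 1 < r*t" using tpos by (simp add: divide_less_eq)
  show ?thesis unfolding T 2(1) using a b tpos by (simp add: ennreal_less_iff mult.commute)
qed

lemma Tfun_ge:
  assumes "z \<noteq> 0" "Phi z \<le> ennreal (1/t)"
  shows "Tfun \<mu> z \<ge> t"
  using Tfun_lt_iff[OF assms(1)] assms(2) by (simp add: not_less[symmetric])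

lemma Tfun_gt:
  assumes "z \<noteq> 0" "Phi z < ennreal (1/t)"
  shows "Tfun \<mu> z > t"
proof (cases rule: Phi_cases[OF assms(1)])
  case 1 then show ?thesis using assms by simp
next
  case (2 r)
  then have T: "Tfun \<mu> z = 1 / r" by (simp add: Tfun_eq[OF assms(1)])
  have "r < 1/t" using assms(2) 2 tpos by (simp add: ennreal_less_iff)
  then have "r * t < 1" using tpos by (simp add: less_divide_eq)
  then show ?thesis unfolding T using 2 by (simp add: less_divide_eq mult.commute)
qed

lemma Tfun_eqt:
  assumes "z \<noteq> 0" "Phi z = ennreal (1/t)"
  shows "Tfun \<mu> z = t"
  using assms tpos by (simp add: Tfun_eq[OF assms(1)])

lemma closure_lt1:
  assumes z: "z \<noteq> 0" "cmod z < 1" "Phi z = ennreal (1/t)"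
  shows "z \<in> closure D"
proof -
  define \<theta> where "\<theta> = Arg z"
  define \<rho> where "\<rho> = cmod z"
  have zr: "z = ray \<theta> \<rho>" using ray_polar[of z] by (simp add: \<theta>_def \<rho>_def)
  have rp: "0 < \<rho>" "\<rho> < 1" using z by (auto simp: \<rho>_def)
  define s where "s n = \<rho> + (1 - \<rho>) / (real n + 2)" for n
  have s: "\<rho> < s n" "s n < 1" for n
  proof -
    have "(1 - \<rho>) / (real n + 2) < 1 - \<rho>" using rp by (simp add: divide_less_eq)
    moreover have "(1 - \<rho>) / (real n + 2) > 0" using rp by simp
    ultimately show "\<rho> < s n" "s n < 1" by (auto simp: s_def)
  qed
  have "(\<lambda>n. (1 - \<rho>) / (real n + 2)) \<longlonglongrightarrow> 0" by real_asymp
  then have "s \<longlonglongrightarrow> \<rho> + 0" unfolding s_def[abs_def] by (intro tendsto_intros)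
  then have "(\<lambda>n. complex_of_real (s n)) \<longlonglongrightarrow> complex_of_real \<rho>" by (intro tendsto_of_real) simp
  then have "(\<lambda>n. complex_of_real (s n) * exp (\<i> * of_real \<theta>)) \<longlonglongrightarrow> complex_of_real \<rho> * exp (\<i> * of_real \<theta>)"
    by (rule tendsto_mult_right)
  then have lim: "(\<lambda>n. ray \<theta> (s n)) \<longlonglongrightarrow> z" unfolding zr ray_def by simp
  have "ray \<theta> (s n) \<in> D" for n
  proof -
    have "Phi z < Phi (ray \<theta> (s n))" unfolding zr using rp s[of n] by (intro Phi_ray_mono) auto
    moreover have "ray \<theta> (s n) \<noteq> 0" using s[of n] rp by (simp add: ray_def)
    ultimately show ?thesis using z by (simp add: D_def)
  qed
  then show ?thesis using lim unfolding closure_sequential by (intro exI[of _ "\<lambda>n. ray \<theta> (s n)"]) blast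
qed

lemma closure_gt1:
  assumes z: "z \<noteq> 0" "cmod z > 1" "Phi z = ennreal (1/t)"
  shows "z \<in> closure D"
proof -
  define z' where "z' = 1 / cnj z"
  have z'0: "z' \<noteq> 0" using z by (simp add: z'_def)
  have cz: "cmod z' < 1" using z by (simp add: z'_def norm_divide)
  have "Phi z' = ennreal (1/t)" using Phi_sym[OF z(1)] z by (simp add: z'_def)
  then have "z' \<in> closure D" using closure_lt1 z'0 cz by blast
  then obtain d where d: "\<And>n. d n \<in> D" "d \<longlonglongrightarrow> z'" unfolding closure_sequential by blast
  have "(\<lambda>n. 1 / cnj (d n)) \<longlonglongrightarrow> 1 / cnj z'"
    using d(2) z'0 by (intro tendsto_intros) auto
  moreover have "1 / cnj z' = z" by (simp add: z'_def)
  moreover have "1 / cnj (d n) \<in> D" for n using D_sym d(1) by blast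
  ultimately show ?thesis unfolding closure_sequential by metis
qed

end

lemma unit_sq: "cmod u = 1 \<Longrightarrow> (cmod (1 - u))^2 = 2 - 2 * Re u"
  using norm_one_minus_sq[of u 1] by simp

lemma sq_bound: "(cmod (1 - exp (\<i> * of_real u)))^2 \<le> u^2"
proof -
  have "(cmod (1 - exp (\<i> * of_real u)))^2 = 2 - 2 * cos u"
    using unit_sq[of "exp (\<i> * of_real u)"] by (simp add: Re_exp)
  also have "cos u = 1 - 2 * (sin (u/2))^2" using cos_double_sin[of "u/2"] by simp
  also have "2 - 2 * (1 - 2 * (sin (u/2))^2) = 4 * (sin (u/2))^2" by simp
  also have "(sin (u/2))^2 \<le> (u/2)^2"
  proof -
    have "\<bar>sin (u/2)\<bar>^2 \<le> \<bar>u/2\<bar>^2" by (rule power_mono[OF abs_sin_x_le_abs_x abs_ge_zero])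
    then show ?thesis by (simp only: power2_abs)
  qed
  then have "4 * (sin (u/2))^2 \<le> u^2" by (simp add: power_divide)
  finally show ?thesis .
qed

lemma exp_dist: "cmod (exp (\<i> * of_real u) - 1) \<le> \<bar>u\<bar>"
proof -
  have "(cmod (exp (\<i> * of_real u) - 1))^2 \<le> \<bar>u\<bar>^2" using sq_bound[of u] by (simp add: norm_minus_commute)
  then show ?thesis by (rule power2_le_imp_le) simp
qed

lemma ftc_inv_sq:
  fixes \<beta> a b :: real
  assumes ab: "0 < a" "a < b"
  shows "(\<integral>\<^sup>+ \<phi>. ennreal (indicator {a-\<beta>..b-\<beta>} \<phi> / (\<phi>+\<beta>)^2) \<partial>lborel) = ennreal (1/a - 1/b)"
proof -
  have "((\<lambda>\<phi>. 1/(\<phi>+\<beta>)^2) has_integral ((-1/((b-\<beta>)+\<beta>)) - (-1/((a-\<beta>)+\<beta>)))) {a-\<beta>..b-\<beta>}"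
  proof (rule fundamental_theorem_of_calculus)
    show "a - \<beta> \<le> b - \<beta>" using ab by simp
    fix x assume x: "x \<in> {a-\<beta>..b-\<beta>}"
    then have xp: "x + \<beta> > 0" using ab by auto
    have "((\<lambda>\<phi>. -1/(\<phi>+\<beta>)) has_real_derivative 1/(x+\<beta>)^2) (at x)"
      using xp by (auto intro!: derivative_eq_intros simp: power2_eq_square field_simps)
    then show "((\<lambda>\<phi>. -1/(\<phi>+\<beta>)) has_vector_derivative 1/(x+\<beta>)^2) (at x within {a-\<beta>..b-\<beta>})"
      by (simp add: has_real_derivative_iff_has_vector_derivative has_vector_derivative_at_within)
  qed
  then have "((\<lambda>\<phi>. 1/(\<phi>+\<beta>)^2) has_integral (1/a - 1/b)) {a-\<beta>..b-\<beta>}" by simp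
  from nn_integral_has_integral_lebesgue[OF _ this] show ?thesis by simp
qed

context CMt begin

lemma cos_lt_imp:
  assumes "cos d < cos b" "0 \<le> d" "d \<le> pi" "-pi < b" "b \<le> pi"
  shows "\<bar>b\<bar> < d"
proof -
  have "cos \<bar>b\<bar> = cos b" by (cases "b \<ge> 0") auto
  then show ?thesis using cos_mono_less_eq[of d "\<bar>b\<bar>"] assms by auto
qed

lemma inner_inf:
  assumes w: "cmod w = 1" and e: "0 < \<epsilon>" "\<epsilon> \<le> 1"
    and A: "Re (exp (\<i> * of_real \<theta>0) * cnj w) > cos (\<epsilon>/2)"
  shows "(\<integral>\<^sup>+ \<phi>. indicator {-3*\<epsilon>/4..3*\<epsilon>/4} \<phi> * inverse (ennreal ((cmod (1 - exp (\<i> * of_real (\<theta>0 + \<phi>)) * cnj w))^2)) \<partial>lborel) = \<infinity>"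
    (is "?I = \<infinity>")
proof -
  define v where "v = exp (\<i> * of_real \<theta>0) * cnj w"
  have v1: "cmod v = 1" using w by (simp add: v_def norm_mult)
  define \<beta> where "\<beta> = Arg v"
  have v0: "v \<noteq> 0" using v1 by auto
  have ve: "v = exp (\<i> * of_real \<beta>)" using polar[of v] v1 by (simp add: \<beta>_def)
  have "Re v = cos \<beta>" by (simp add: ve Re_exp)
  then have cb: "cos (\<epsilon>/2) < cos \<beta>" using A by (simp add: v_def)
  have pi1: "\<epsilon>/2 \<le> pi" using e pi_gt3 by linarith
  have b: "\<bar>\<beta>\<bar> < \<epsilon>/2"
    by (rule cos_lt_imp[OF cb]) (use e pi1 mpi_less_Arg Arg_le_pi in \<open>auto simp: \<beta>_def\<close>)
  have low: "?I \<ge> ennreal (1/a - 4/\<epsilon>)" if a: "0 < a" "a < \<epsilon>/4" for a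
  proof -
    have "ennreal (1/a - 1/(\<epsilon>/4)) = (\<integral>\<^sup>+ \<phi>. ennreal (indicator {a-\<beta>..\<epsilon>/4-\<beta>} \<phi> / (\<phi>+\<beta>)^2) \<partial>lborel)"
      using ftc_inv_sq[OF a(1) a(2), of \<beta>] by simp
    also have "\<dots> \<le> ?I"
    proof (rule nn_integral_mono)
      fix \<phi>
      show "ennreal (indicator {a-\<beta>..\<epsilon>/4-\<beta>} \<phi> / (\<phi>+\<beta>)^2)
        \<le> indicator {-3*\<epsilon>/4..3*\<epsilon>/4} \<phi> * inverse (ennreal ((cmod (1 - exp (\<i> * of_real (\<theta>0 + \<phi>)) * cnj w))^2))"
      proof (cases "\<phi> \<in> {a-\<beta>..\<epsilon>/4-\<beta>}")
        case False then show ?thesis by simp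
      next
        case True
        then have in2: "\<phi> \<in> {-3*\<epsilon>/4..3*\<epsilon>/4}" using b a by auto
        have pb: "\<phi> + \<beta> > 0" using True a by auto
        have e1: "exp (\<i> * of_real (\<theta>0 + \<phi>)) = exp (\<i> * of_real \<theta>0) * exp (\<i> * of_real \<phi>)"
          by (simp add: distrib_left exp_add)
        have e2: "exp (\<i> * of_real (\<phi> + \<beta>)) = exp (\<i> * of_real \<beta>) * exp (\<i> * of_real \<phi>)"
          by (simp add: distrib_left exp_add mult.commute)
        have ex: "exp (\<i> * of_real (\<theta>0 + \<phi>)) * cnj w = exp (\<i> * of_real (\<phi> + \<beta>))"
          unfolding e1 e2 ve[symmetric] v_def by (simp add: mult_ac)
        define d where "d = (cmod (1 - exp (\<i> * of_real (\<theta>0 + \<phi>)) * cnj w))^2"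
        have dle: "d \<le> (\<phi>+\<beta>)^2" unfolding d_def ex by (rule sq_bound)
        have "ennreal (1/(\<phi>+\<beta>)^2) \<le> inverse (ennreal d)"
        proof (cases "d = 0")
          case True then show ?thesis by simp
        next
          case False
          then have dp: "d > 0" by (simp add: d_def)
          have "1/(\<phi>+\<beta>)^2 \<le> 1/d" using dp dle pb by (intro divide_left_mono) auto
          then show ?thesis using dp by (simp add: inverse_ennreal ennreal_leI inverse_eq_divide)
        qed
        then show ?thesis using True in2 by (simp add: d_def)
      qed
    qed
    finally show ?thesis by simp
  qed
  show ?thesis
  proof (rule ccontr)
    assume "?I \<noteq> \<infinity>"
    then obtain c where c: "?I = ennreal c" "c \<ge> 0" by (cases ?I rule: ennreal_cases) auto
    define a where "a = 1 / (c + 4/\<epsilon> + 1)"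
    have den: "c + 4/\<epsilon> + 1 > 4/\<epsilon>" using c by simp
    have ep: "4/\<epsilon> > 0" using e by simp
    have pos: "c + 4/\<epsilon> + 1 > 0" using den ep by linarith
    have a0: "a > 0" using pos by (simp add: a_def)
    have "a < 1 / (4/\<epsilon>)" unfolding a_def using den ep pos by (intro divide_strict_left_mono) auto
    then have a1: "a < \<epsilon>/4" by simp
    have "1/a = c + 4/\<epsilon> + 1" using den ep by (simp add: a_def)
    then have "1/a - 4/\<epsilon> = c + 1" by simp
    then have "ennreal (c + 1) \<le> ennreal c" using low[OF a0 a1] c by simp
    then show False using c by (simp add: ennreal_le_iff)
  qed
qed

end

context CMt begin

lemma fOne_meas_integrand:
  "(\<lambda>w. inverse (ennreal ((cmod (1 - exp (\<i> * of_real \<theta>) * cnj w))^2))) \<in> borel_measurable \<mu>"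
proof -
  have c: "(\<lambda>w. (cmod (1 - exp (\<i> * of_real \<theta>) * cnj w))^2) \<in> borel_measurable borel"
    by (intro borel_measurable_continuous_onI continuous_intros)
  show ?thesis using meas_borel[OF c] by measurable
qed

lemma mu_A_zero:
  assumes e: "0 < \<epsilon>" "\<epsilon> \<le> 1"
    and f: "\<And>\<phi>. \<bar>\<phi>\<bar> < \<epsilon> \<Longrightarrow> fOne \<mu> (\<theta>0 + \<phi>) \<le> ennreal (1/t)"
  shows "emeasure \<mu> {w. cos (\<epsilon>/2) < Re (exp (\<i> * of_real \<theta>0) * cnj w)} = 0"
proof -
  define A where "A = {w. cos (\<epsilon>/2) < Re (exp (\<i> * of_real \<theta>0) * cnj w)}"
  have "open A" unfolding A_def by (intro open_Collect_less continuous_intros)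
  then have Am: "A \<in> sets \<mu>" using sets_eq by simp
  define J where "J = {-3*\<epsilon>/4..3*\<epsilon>/4}"
  define F where "F w \<phi> = indicator J \<phi> * inverse (ennreal ((cmod (1 - exp (\<i> * of_real (\<theta>0 + \<phi>)) * cnj w))^2))" for w \<phi>
  interpret P: pair_sigma_finite \<mu> "lborel :: real measure" ..
  have g: "(\<lambda>p :: complex \<times> real. (cmod (1 - exp (\<i> * of_real (\<theta>0 + snd p)) * cnj (fst p)))^2) \<in> borel_measurable borel"
    by (intro borel_measurable_continuous_onI continuous_intros)
  have m2: "(\<lambda>p :: complex \<times> real. inverse (ennreal ((cmod (1 - exp (\<i> * of_real (\<theta>0 + snd p)) * cnj (fst p)))^2))) \<in> borel_measurable borel"
    using g by measurable
  have "closed (UNIV \<times> J)" unfolding J_def by (intro closed_Times) auto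
  then have "(UNIV \<times> J) \<in> sets (borel :: (complex \<times> real) measure)" by (rule borel_closed)
  then have m1: "(\<lambda>p :: complex \<times> real. indicator (UNIV \<times> J) p :: ennreal) \<in> borel_measurable borel"
    by (rule borel_measurable_indicator)
  have eqF: "case_prod F = (\<lambda>p. indicator (UNIV \<times> J) p * inverse (ennreal ((cmod (1 - exp (\<i> * of_real (\<theta>0 + snd p)) * cnj (fst p)))^2)))"
    by (auto simp: F_def fun_eq_iff indicator_def)
  have Fm: "case_prod F \<in> borel_measurable (\<mu> \<Otimes>\<^sub>M lborel)"
  proof -
    have s: "sets (\<mu> \<Otimes>\<^sub>M lborel) = sets (borel :: (complex \<times> real) measure)"
      using sets_pair_measure_cong[OF sets_eq sets_lborel] borel_prod by metis
    have "case_prod F \<in> borel_measurable (borel :: (complex \<times> real) measure)"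
      unfolding eqF using m1 m2 by (rule borel_measurable_times_ennreal)
    then show ?thesis by (subst measurable_cong_sets[OF s refl])
  qed
  have inner: "(\<integral>\<^sup>+ w. F w \<phi> \<partial>\<mu>) = indicator J \<phi> * fOne \<mu> (\<theta>0 + \<phi>)" for \<phi>
    unfolding F_def fOne_def
    by (rule nn_integral_cmult) (rule fOne_meas_integrand)
  have "(\<integral>\<^sup>+ \<phi>. (\<integral>\<^sup>+ w. F w \<phi> \<partial>\<mu>) \<partial>lborel) \<le> (\<integral>\<^sup>+ \<phi>. ennreal (1/t) * indicator J \<phi> \<partial>lborel)"
  proof (rule nn_integral_mono)
    fix \<phi>
    show "(\<integral>\<^sup>+ w. F w \<phi> \<partial>\<mu>) \<le> ennreal (1/t) * indicator J \<phi>"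
    proof (cases "\<phi> \<in> J")
      case True
      then have "\<bar>\<phi>\<bar> < \<epsilon>" using e by (auto simp: J_def)
      then show ?thesis using True f inner by simp
    next
      case False then show ?thesis using inner by simp
    qed
  qed
  also have "\<dots> = ennreal (1/t) * emeasure lborel J" by (simp add: nn_integral_cmult_indicator J_def)
  also have "\<dots> < \<infinity>" using e by (simp add: J_def ennreal_mult_less_top)
  finally have fin: "(\<integral>\<^sup>+ \<phi>. (\<integral>\<^sup>+ w. F w \<phi> \<partial>\<mu>) \<partial>lborel) < \<infinity>" .
  have "(\<integral>\<^sup>+ \<phi>. (\<integral>\<^sup>+ w. F w \<phi> \<partial>\<mu>) \<partial>lborel) = (\<integral>\<^sup>+ w. (\<integral>\<^sup>+ \<phi>. F w \<phi> \<partial>lborel) \<partial>\<mu>)"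
    by (rule P.Fubini'[OF Fm])
  also have "\<dots> \<ge> (\<integral>\<^sup>+ w. \<infinity> * indicator A w \<partial>\<mu>)"
  proof (rule nn_integral_mono_AE)
    show "AE w in \<mu>. \<infinity> * indicator A w \<le> (\<integral>\<^sup>+ \<phi>. F w \<phi> \<partial>lborel)"
      using AE_sphere
    proof eventually_elim
      case (elim w)
      show ?case
      proof (cases "w \<in> A")
        case True
        then have "(\<integral>\<^sup>+ \<phi>. F w \<phi> \<partial>lborel) = \<infinity>"
          unfolding F_def J_def using inner_inf[OF elim e, of \<theta>0] by (simp add: A_def)
        then show ?thesis by simp
      next
        case False then show ?thesis by simp
      qed
    qed
  qed
  finally have "(\<integral>\<^sup>+ w. \<infinity> * indicator A w \<partial>\<mu>) < \<infinity>" using fin by simp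
  then have "\<infinity> * emeasure \<mu> A < \<infinity>" using Am by (simp add: nn_integral_cmult_indicator)
  then show ?thesis by (simp add: A_def ennreal_top_mult split: if_splits)
qed

end

lemma strict_conv_real:
  fixes c s Cx Sx :: real
  assumes u: "c^2 + s^2 = 1" "Cx^2 + Sx^2 = 1" and cC: "c < Cx" "Cx < 1"
  shows "2 - 2*(Cx*c - Sx * s) > 0" "2 - 2*(Cx*c + Sx * s) > 0" "2 - 2*c > 0"
    "2/(2 - 2*c) < 1/(2 - 2*(Cx*c - Sx * s)) + 1/(2 - 2*(Cx*c + Sx * s))"
proof -
  define p where "p = 2 - 2*(Cx*c - Sx * s)"
  define q where "q = 2 - 2*(Cx*c + Sx * s)"
  define r where "r = 2 - 2*c"
  have pe: "p = (Cx-c)^2 + (Sx+s)^2" unfolding p_def using u by (simp add: power2_eq_square algebra_simps)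
  have qe: "q = (Cx-c)^2 + (Sx-s)^2" unfolding q_def using u by (simp add: power2_eq_square algebra_simps)
  have "(Cx-c)^2 > 0" using cC by simp
  then have pp: "p > 0" and qp: "q > 0" unfolding pe qe by (auto intro: add_pos_nonneg)
  then show "2 - 2*(Cx*c - Sx * s) > 0" "2 - 2*(Cx*c + Sx * s) > 0" by (auto simp: p_def q_def)
  have rp: "r > 0" using cC by (simp add: r_def)
  then show "2 - 2*c > 0" by (simp add: r_def)
  have "r*(p+q) - 2*p*q = 8*((1-c)*(1-Cx*c) - (1-Cx*c)^2 + (Sx^2)*(s^2))"
    unfolding p_def q_def r_def by (simp add: algebra_simps power2_eq_square)
  also have "Sx^2 = 1 - Cx^2" using u by simp
  also have "s^2 = 1 - c^2" using u by simp
  also have "8*((1-c)*(1-Cx*c) - (1-Cx*c)^2 + (1 - Cx^2)*(1 - c^2)) = 8*(1-Cx)*((1-c^2) + (Cx-c))"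
    by (simp add: algebra_simps power2_eq_square)
  finally have key: "r*(p+q) - 2*p*q = 8*(1-Cx)*((1-c^2) + (Cx-c))" .
  have "c^2 \<le> 1" using u by (metis le_add_same_cancel1 zero_le_power2)
  then have "8*(1-Cx)*((1-c^2) + (Cx-c)) > 0" using cC by (intro mult_pos_pos) auto
  then have pos: "r*(p+q) - 2*p*q > 0" using key by simp
  have "1/p + 1/q - 2/r = (r*(p+q) - 2*p*q) / (p*q*r)"
    using pp qp rp by (simp add: field_simps)
  also have "\<dots> > 0" using pos pp qp rp by simp
  finally show "2/(2 - 2*c) < 1/(2 - 2*(Cx*c - Sx * s)) + 1/(2 - 2*(Cx*c + Sx * s))" by (simp add: p_def q_def r_def)
qed

context CMt begin

lemma convex_contra:
  assumes e: "0 < \<epsilon>" "\<epsilon> \<le> 1"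
    and f: "\<And>\<phi>. \<bar>\<phi>\<bar> < \<epsilon> \<Longrightarrow> fOne \<mu> (\<theta>0 + \<phi>) \<le> ennreal (1/t)"
    and f0: "fOne \<mu> \<theta>0 = ennreal (1/t)"
    and A0: "emeasure \<mu> {w. cos (\<epsilon>/2) < Re (exp (\<i> * of_real \<theta>0) * cnj w)} = 0"
  shows False
proof -
  define A where "A = {w. cos (\<epsilon>/2) < Re (exp (\<i> * of_real \<theta>0) * cnj w)}"
  have "open A" unfolding A_def by (intro open_Collect_less continuous_intros)
  then have Am: "A \<in> sets \<mu>" using sets_eq by simp
  have AEA: "AE w in \<mu>. w \<notin> A" using Am A0 by (intro AE_not_in) (auto simp: A_def)
  define h where "h = \<epsilon>/4"
  define C where "C = cos h"
  define S where "S = sin h"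
  have hp: "0 < h" "h < \<epsilon>/2" using e by (auto simp: h_def)
  have pi1: "\<epsilon>/2 \<le> pi" using e pi_gt3 by linarith
  have Cd: "cos (\<epsilon>/2) < C" unfolding C_def using hp pi1 by (subst cos_mono_less_eq) auto
  have C1: "C < 1" unfolding C_def using cos_mono_less_eq[of h 0] hp pi1 by auto
  have CS: "C^2 + S^2 = 1" by (simp add: C_def S_def)
  define k where "k \<theta> w = inverse (ennreal ((cmod (1 - exp (\<i> * of_real \<theta>) * cnj w))^2))" for \<theta> w
  have km: "k \<theta> \<in> borel_measurable \<mu>" for \<theta> unfolding k_def[abs_def] by (rule fOne_meas_integrand)
  have fk: "fOne \<mu> \<theta> = (\<integral>\<^sup>+ w. k \<theta> w \<partial>\<mu>)" for \<theta> by (simp add: fOne_def k_def)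
  have lt: "AE w in \<mu>. 2 * k \<theta>0 w < k (\<theta>0 + h) w + k (\<theta>0 + -h) w"
    using AE_sphere AEA
  proof eventually_elim
    case (elim w)
    define v where "v = exp (\<i> * of_real \<theta>0) * cnj w"
    have v1: "cmod v = 1" using elim by (simp add: v_def norm_mult)
    define c where "c = Re v"
    define s where "s = Im v"
    have cs: "c^2 + s^2 = 1" using v1 unfolding c_def s_def by (metis cmod_power2 power_one)
    have "\<not> cos (\<epsilon>/2) < Re v" using elim(2) unfolding A_def by (simp only: mem_Collect_eq v_def not_False_eq_True)
    then have cC: "c < C" using Cd by (simp add: c_def)
    have ex: "exp (\<i> * of_real (\<theta>0 + x)) * cnj w = cis x * v" for x
      by (simp add: v_def cis_conv_exp distrib_left exp_add mult_ac)
    have n1: "cmod (cis x * v) = 1" for x using v1 by (simp add: norm_mult)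
    have kp: "k (\<theta>0 + h) w = inverse (ennreal (2 - 2*(C*c - S * s)))"
      unfolding k_def ex unit_sq[OF n1] by (simp add: C_def S_def c_def s_def)
    have kq: "k (\<theta>0 + -h) w = inverse (ennreal (2 - 2*(C*c + S * s)))"
      unfolding k_def ex unit_sq[OF n1] by (simp add: C_def S_def c_def s_def)
    have k0: "k \<theta>0 w = inverse (ennreal (2 - 2*c))"
      using unit_sq[OF v1] unfolding k_def c_def by (simp add: v_def)
    note sc = strict_conv_real[OF cs CS cC C1]
    have "2 * k \<theta>0 w = ennreal 2 * ennreal (inverse (2 - 2*c))"
      unfolding k0 using sc(3) by (simp add: inverse_ennreal)
    also have "\<dots> = ennreal (2 / (2 - 2*c))"
      using sc(3) by (simp add: ennreal_mult' divide_inverse)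
    also have "\<dots> < ennreal (1/(2 - 2*(C*c - S * s)) + 1/(2 - 2*(C*c + S * s)))"
      using sc(4) add_pos_pos[OF divide_pos_pos[OF _ sc(1)] divide_pos_pos[OF _ sc(2)]] by (intro ennreal_lessI) auto
    also have "\<dots> = ennreal (1/(2 - 2*(C*c - S * s))) + ennreal (1/(2 - 2*(C*c + S * s)))"
      by (rule ennreal_plus) (use sc(1,2) in auto)
    also have "\<dots> = k (\<theta>0 + h) w + k (\<theta>0 + -h) w"
      unfolding kp kq using sc(1,2) by (simp only: inverse_ennreal inverse_eq_divide)
    finally show ?case .
  qed
  have "(\<integral>\<^sup>+ w. 2 * k \<theta>0 w \<partial>\<mu>) < (\<integral>\<^sup>+ w. k (\<theta>0 + h) w + k (\<theta>0 + -h) w \<partial>\<mu>)"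
  proof (rule nn_integral_less)
    show "(\<integral>\<^sup>+ w. 2 * k \<theta>0 w \<partial>\<mu>) \<noteq> \<infinity>"
      using f0 km by (simp add: nn_integral_cmult fk ennreal_mult_eq_top_iff)
    show "AE w in \<mu>. 2 * k \<theta>0 w \<le> k (\<theta>0 + h) w + k (\<theta>0 + -h) w" using lt by eventually_elim simp
    show "\<not> (AE w in \<mu>. k (\<theta>0 + h) w + k (\<theta>0 + -h) w \<le> 2 * k \<theta>0 w)"
    proof
      assume "AE w in \<mu>. k (\<theta>0 + h) w + k (\<theta>0 + -h) w \<le> 2 * k \<theta>0 w"
      with lt have "AE w in \<mu>. False" by eventually_elim simp
      then show False by simp
    qed
  qed (use km in auto)
  also have "(\<integral>\<^sup>+ w. k (\<theta>0 + h) w + k (\<theta>0 + -h) w \<partial>\<mu>) = fOne \<mu> (\<theta>0 + h) + fOne \<mu> (\<theta>0 + -h)"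
    unfolding fk by (rule nn_integral_add) (use km in auto)
  also have "\<dots> \<le> ennreal (1/t) + ennreal (1/t)"
    using f[of h] f[of "-h"] hp by (intro add_mono) auto
  finally have "2 * fOne \<mu> \<theta>0 < ennreal (1/t) + ennreal (1/t)"
    using km by (simp add: nn_integral_cmult fk)
  then show False using f0 by (simp add: mult_2)
qed

lemma closure_circle':
  assumes z: "cmod z = 1" "Phi z = ennreal (1/t)"
  shows "z \<in> closure D"
proof (rule ccontr)
  assume "z \<notin> closure D"
  then obtain \<epsilon>0 where e0: "\<epsilon>0 > 0" "\<And>y. y \<in> D \<Longrightarrow> \<not> dist y z < \<epsilon>0"
    unfolding closure_approachable by blast
  define \<epsilon> where "\<epsilon> = min \<epsilon>0 1"
  have e: "0 < \<epsilon>" "\<epsilon> \<le> 1" using e0 by (auto simp: \<epsilon>_def)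
  define \<theta>0 where "\<theta>0 = Arg z"
  have ze: "z = exp (\<i> * of_real \<theta>0)" using polar[of z] z by (simp add: \<theta>0_def)
  have f0: "fOne \<mu> \<theta>0 = ennreal (1/t)" using z Phi_fOne[of \<theta>0] ze by simp
  have f: "fOne \<mu> (\<theta>0 + \<phi>) \<le> ennreal (1/t)" if \<phi>: "\<bar>\<phi>\<bar> < \<epsilon>" for \<phi>
  proof -
    define y where "y = exp (\<i> * of_real (\<theta>0 + \<phi>))"
    have "y - z = exp (\<i> * of_real \<theta>0) * (exp (\<i> * of_real \<phi>) - 1)"
      by (simp add: y_def ze distrib_left exp_add algebra_simps)
    then have "dist y z = cmod (exp (\<i> * of_real \<phi>) - 1)" by (simp add: dist_norm norm_mult)
    also have "\<dots> \<le> \<bar>\<phi>\<bar>" by (rule exp_dist)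
    finally have "dist y z < \<epsilon>0" using \<phi> by (simp add: \<epsilon>_def)
    then have "y \<notin> D" using e0 by blast
    moreover have "y \<noteq> 0" by (simp add: y_def)
    ultimately have "Phi y \<le> ennreal (1/t)" by (auto simp: D_def)
    moreover have "Phi y = fOne \<mu> (\<theta>0 + \<phi>)" unfolding y_def by (rule Phi_fOne)
    ultimately show ?thesis by simp
  qed
  have "emeasure \<mu> {w. cos (\<epsilon>/2) < Re (exp (\<i> * of_real \<theta>0) * cnj w)} = 0"
    by (rule mu_A_zero[OF e f])
  from convex_contra[OF e f f0 this] show False .
qed

end

context CMt begin

lemma main:
  shows "(\<forall>z\<in>Delta \<mu> t. 1 / cnj z \<in> Delta \<mu> t)
    \<and> Delta \<mu> t = {z. z \<noteq> 0 \<and> Tfun \<mu> z < t}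
    \<and> (\<forall>z. z \<notin> closure (Delta \<mu> t) \<and> z \<noteq> 0 \<longrightarrow> Tfun \<mu> z > t)
    \<and> (\<forall>z\<in>frontier (Delta \<mu> t) \<inter> sphere 0 1. Tfun \<mu> z \<ge> t)
    \<and> (\<forall>z\<in>frontier (Delta \<mu> t) - sphere 0 1. Tfun \<mu> z = t)"
proof (intro conjI)
  show "\<forall>z\<in>Delta \<mu> t. 1 / cnj z \<in> Delta \<mu> t" using D_sym by (simp add: Delta_eq)
  show "Delta \<mu> t = {z. z \<noteq> 0 \<and> Tfun \<mu> z < t}"
    unfolding Delta_eq D_def using Tfun_lt_iff by auto
  have fr: "frontier (Delta \<mu> t) = closure D - D"
    unfolding Delta_eq frontier_def using open_D by (simp add: interior_open)
  show "\<forall>z. z \<notin> closure (Delta \<mu> t) \<and> z \<noteq> 0 \<longrightarrow> Tfun \<mu> z > t"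
  proof (intro allI impI)
    fix z assume a: "z \<notin> closure (Delta \<mu> t) \<and> z \<noteq> 0"
    then have nc: "z \<notin> closure D" and z0: "z \<noteq> 0" by (auto simp: Delta_eq)
    then have "z \<notin> D" using closure_subset by blast
    then have le: "Phi z \<le> ennreal (1/t)" using z0 by (auto simp: D_def)
    have "Phi z \<noteq> ennreal (1/t)"
    proof
      assume e: "Phi z = ennreal (1/t)"
      have "z \<in> closure D"
      proof (cases "cmod z" "1::real" rule: linorder_cases)
        case less then show ?thesis using closure_lt1 z0 e by blast
      next
        case equal then show ?thesis using closure_circle' e by blast
      next
        case greater then show ?thesis using closure_gt1 z0 e by blast
      qed
      then show False using nc by simp
    qed
    then have "Phi z < ennreal (1/t)" using le by simp
    then show "Tfun \<mu> z > t" using Tfun_gt z0 by blast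
  qed
  show "\<forall>z\<in>frontier (Delta \<mu> t) \<inter> sphere 0 1. Tfun \<mu> z \<ge> t"
  proof
    fix z assume "z \<in> frontier (Delta \<mu> t) \<inter> sphere 0 1"
    then have "z \<notin> D" "z \<noteq> 0" using fr by auto
    then show "Tfun \<mu> z \<ge> t" using Tfun_ge by (auto simp: D_def)
  qed
  show "\<forall>z\<in>frontier (Delta \<mu> t) - sphere 0 1. Tfun \<mu> z = t"
  proof
    fix z assume "z \<in> frontier (Delta \<mu> t) - sphere 0 1"
    then have zc: "z \<in> closure D" "z \<notin> D" "cmod z \<noteq> 1" using fr by auto
    have z0: "z \<noteq> 0" using zc zero_not_closure by auto
    have le: "Phi z \<le> ennreal (1/t)" using zc z0 by (auto simp: D_def)
    obtain d where d: "\<And>n. d n \<in> D" "d \<longlonglongrightarrow> z" using zc(1) unfolding closure_sequential by blast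
    have "(\<lambda>n. Phi (d n)) \<longlonglongrightarrow> Phi z" by (rule Phi_cont[OF d(2) z0 zc(3)])
    moreover have "ennreal (1/t) \<le> Phi (d n)" for n using d(1)[of n] by (auto simp: D_def)
    ultimately have "ennreal (1/t) \<le> Phi z" by (intro LIMSEQ_le_const) auto
    then have "Phi z = ennreal (1/t)" using le by simp
    then show "Tfun \<mu> z = t" using Tfun_eqt z0 by blast
  qed
qed

end

theorem theorem4p6:
  fixes \<mu> :: "complex measure" and t :: real
  assumes "circ_meas \<mu>" and "t > 0"
  shows "(\<forall>z\<in>Delta \<mu> t. 1 / cnj z \<in> Delta \<mu> t)
    \<and> Delta \<mu> t = {z. z \<noteq> 0 \<and> Tfun \<mu> z < t}
    \<and> (\<forall>z. z \<notin> closure (Delta \<mu> t) \<and> z \<noteq> 0 \<longrightarrow> Tfun \<mu> z > t)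
    \<and> (\<forall>z\<in>frontier (Delta \<mu> t) \<inter> sphere 0 1. Tfun \<mu> z \<ge> t)
    \<and> (\<forall>z\<in>frontier (Delta \<mu> t) - sphere 0 1. Tfun \<mu> z = t)"
proof -
  interpret CMt \<mu> t by unfold_locales (use assms in auto)
  show ?thesis by (rule main)
qed

end
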